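(* Let $X,X_1,X_2,\dots$ be i.i.d. positive random variables with $\mathbb{E}X=1$, let $p\ge2$ be an integer, and suppose $\mathbb{P}\{X\ge x\}=o(x^{-p-1})$ as $x\to\infty$. Let $2\le r\le p-1$ and let $\gamma=(\gamma_1,\dots,\gamma_r)$ be positive integers with $\gamma_1+\dots+\gamma_r=p$. With $S_r=X_1+\dots+X_r$, $$\mathbb{E}\frac{X_1^{2\gamma_1}\cdots X_r^{2\gamma_r}}{\left(\frac1nS_r+1\right)^p}=o(n^{p-r-1}\log n)\quad(n\to\infty).$$ *)

theory Defs
  imports "HOL-Probability.Probability" "HOL-Library.Landau_Symbols"
begin

end

theory Submission
  imports Defs
begin


lemma minsum:
  fixes n :: real assumes n: "n \<ge> 1"
  shows "summable (\<lambda>j::nat. min 1 (n^2/4^j))" "(\<Sum>j. min 1 (n^2/4^j)) \<le> log 2 n + 3"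
proof -
  have g: "summable (\<lambda>j::nat. n^2 * (1/4)^j)" by (intro summable_mult summable_geometric) auto
  have e: "n^2/4^j = n^2 * (1/4)^j" for j :: nat by (simp add: power_one_over)
  show s: "summable (\<lambda>j::nat. min 1 (n^2/4^j))"
    by (rule summable_comparison_test'[OF g]) (auto simp: e)
  define J where "J = nat \<lceil>log 2 n\<rceil>"
  have lg: "log 2 n \<ge> 0" using n by simp
  have JJ: "real J \<ge> log 2 n" "real J \<le> log 2 n + 1" unfolding J_def using lg by linarith+
  have "(2::real) ^ J = 2 powr real J" by (simp add: powr_realpow)
  also have "\<dots> \<ge> 2 powr log 2 n" using JJ by (intro powr_mono) auto
  finally have "(2::real)^J \<ge> n" using n by simp
  then have "(2^J)^2 \<ge> n^2" using n by (intro power_mono) auto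
  moreover have "(4::real)^J = (2^J)^2" by (simp add: power2_eq_square power_mult_distrib[symmetric])
  ultimately have J4: "(4::real)^J \<ge> n^2" by simp
  have s2: "summable (\<lambda>j. min 1 (n^2/4^(j+J)))" using s by (subst summable_iff_shift) 
  have "(\<Sum>j. min 1 (n^2/4^j)) = (\<Sum>j. min 1 (n^2/4^(j+J))) + (\<Sum>j<J. min 1 (n^2/4^j))"
    by (rule suminf_split_initial_segment[OF s])
  also have "(\<Sum>j<J. min 1 (n^2/4^j)) \<le> (\<Sum>j<J. (1::real))" by (intro sum_mono) auto
  also have "(\<Sum>j. min 1 (n^2/4^(j+J))) \<le> (\<Sum>j. (n^2/4^J) * (1/4)^j)"
  proof (rule suminf_le)
    fix j show "min 1 (n^2/4^(j+J)) \<le> (n^2/4^J) * (1/4)^j"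
      by (simp add: power_add power_one_over mult.commute)
  qed (use s2 in \<open>auto intro: summable_mult summable_geometric\<close>)
  also have "(\<Sum>j. (n^2/4^J) * (1/4::real)^j) = (n^2/4^J) * (4/3)"
    by (subst suminf_mult) (auto simp: suminf_geometric)
  also have "\<dots> \<le> 4/3" using J4 by (simp add: divide_le_eq)
  finally show "(\<Sum>j. min 1 (n^2/4^j)) \<le> log 2 n + 3" using JJ by simp
qed



lemma termb:
  fixes n x c :: real and k j :: nat
  assumes n: "n \<ge> 1" and x: "x \<ge> 2^j" and c: "c \<ge> 0"
  shows "(2*x)^(k+2) * (min (2*x) n)^(k+2) * (c / x^(k+4)) \<le> 4^(k+2)*c*n^k * min 1 (n^2/4^j)"
proof -
  have x1: "x \<ge> 1" using x by (meson one_le_numeral one_le_power order_trans)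
  have xp: "x > 0" using x1 by simp
  have x4: "x^2 \<ge> 4^j" proof -
    have "(2^j)^2 \<le> x^2" using x by (intro power_mono) auto
    moreover have "(4::real)^j = (2^j)^2" by (simp add: power2_eq_square power_mult_distrib[symmetric])
    ultimately show ?thesis by simp
  qed
  show ?thesis
  proof (cases "x \<le> n")
    case True
    have "min (2*x) n \<le> 2*x" by simp
    then have "(min (2*x) n)^(k+2) \<le> (2*x)^(k+2)" using n xp by (intro power_mono) auto
    then have "(2*x)^(k+2) * (min (2*x) n)^(k+2) \<le> (2*x)^(k+2) * (2*x)^(k+2)"
      using xp by (intro mult_left_mono) auto
    also have "\<dots> = 4^(k+2) * x^k * x^(k+4)"
    proof -
      have f: "(4::real)^m = 2^m * 2^m" for m by (simp add: power_mult_distrib[symmetric])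
      show ?thesis unfolding f by (simp add: power_mult_distrib power_add algebra_simps power2_eq_square power4_eq_xxxx)
    qed
    finally have A: "(2*x)^(k+2) * (min (2*x) n)^(k+2) * (c / x^(k+4)) \<le> 4^(k+2) * x^k * x^(k+4) * (c / x^(k+4))"
      using c xp by (intro mult_right_mono) auto
    also have "\<dots> = 4^(k+2) * c * x^k" using xp by (simp add: field_simps)
    also have "\<dots> \<le> 4^(k+2) * c * n^k" using True xp c by (intro mult_left_mono power_mono) auto
    also have "\<dots> = 4^(k+2)*c*n^k * min 1 (n^2/4^j)"
    proof -
      have "n^2 \<ge> x^2" using True xp by (intro power_mono) auto
      then have "n^2/4^j \<ge> 1" using x4 by simp
      then show ?thesis by simp
    qed
    finally show ?thesis .
  next
    case False
    have mn: "min (2*x) n = n" using False n by simp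
    have "(2*x)^(k+2) * (min (2*x) n)^(k+2) * (c / x^(k+4)) = 2^(k+2) * c * n^k * (n^2 / x^2)"
      unfolding mn using xp by (simp add: field_simps power_mult_distrib power_add power2_eq_square power4_eq_xxxx)
    also have "\<dots> \<le> 4^(k+2) * c * n^k * min 1 (n^2/4^j)"
    proof (rule mult_mono)
      show "2^(k+2) * c * n^k \<le> 4^(k+2) * c * n^k" using c n
        by (intro mult_right_mono power_mono) auto
      have "n^2/x^2 \<le> 1" using False n by (simp add: power_mono)
      moreover have "n^2/x^2 \<le> n^2/4^j" using x4 xp by (intro divide_left_mono) auto
      ultimately show "n^2/x^2 \<le> min 1 (n^2/4^j)" by simp
    qed (use c n in auto)
    finally show ?thesis .
  qed
qed



lemma pw:
  fixes x :: "nat \<Rightarrow> real" and g :: "nat \<Rightarrow> nat" and n :: real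
  assumes I: "finite I" and xp: "\<And>i. i \<in> I \<Longrightarrow> x i > 0" and n: "n > 0"
  shows "(\<Prod>i\<in>I. x i^(2*g i)) / ((\<Sum>i\<in>I. x i)/n+1)^(\<Sum>i\<in>I. g i) \<le> (\<Prod>i\<in>I. x i^(2*g i)/(x i/n+1)^(g i))"
proof -
  have S: "(\<Sum>i\<in>I. x i) \<ge> x j" if "j \<in> I" for j
    using I xp that by (intro member_le_sum) (auto intro: less_imp_le)
  have "((\<Sum>i\<in>I. x i)/n+1)^(\<Sum>i\<in>I. g i) = (\<Prod>i\<in>I. ((\<Sum>i\<in>I. x i)/n+1)^(g i))"
    by (rule power_sum)
  also have "\<dots> \<ge> (\<Prod>i\<in>I. (x i/n+1)^(g i))"
  proof (rule prod_mono)
    fix i assume i: "i \<in> I"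
    have "x i / n \<le> (\<Sum>i\<in>I. x i) / n" using S[OF i] n by (simp add: divide_right_mono)
    then show "0 \<le> (x i/n+1)^(g i) \<and> (x i/n+1)^(g i) \<le> ((\<Sum>i\<in>I. x i)/n+1)^(g i)"
      using xp[OF i] n by (auto intro!: power_mono)
  qed
  finally have D: "(\<Prod>i\<in>I. (x i/n+1)^(g i)) \<le> ((\<Sum>i\<in>I. x i)/n+1)^(\<Sum>i\<in>I. g i)" .
  have P: "(\<Prod>i\<in>I. (x i/n+1)^(g i)) > 0" proof (intro prod_pos zero_less_power)
    fix i assume "i \<in> I" then have "x i / n \<ge> 0" using xp n by (simp add: less_imp_le)
    then show "0 < x i / n + 1" by linarith
  qed
  have N: "(\<Prod>i\<in>I. x i^(2*g i)) \<ge> 0" using xp by (intro prod_nonneg) (auto intro: less_imp_le)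
  have "(\<Prod>i\<in>I. x i^(2*g i)) / ((\<Sum>i\<in>I. x i)/n+1)^(\<Sum>i\<in>I. g i) \<le> (\<Prod>i\<in>I. x i^(2*g i)) / (\<Prod>i\<in>I. (x i/n+1)^(g i))"
    using D P N by (intro divide_left_mono) auto
  also have "\<dots> = (\<Prod>i\<in>I. x i^(2*g i)/(x i/n+1)^(g i))" by (rule prod_dividef[symmetric])
  finally show ?thesis .
qed

lemma Gcore:
  fixes x n :: real and m :: nat
  assumes x: "x > 0" and n: "n > 0"
  shows "x^(2*m)/(x/n+1)^m \<le> x^m * (min x n)^m"
proof -
  have d: "x/n+1 > 0" using x n by (simp add: add_pos_nonneg)
  have "x/(x/n+1) \<le> min x n"
  proof -
    have "x/(x/n+1) \<le> x" using x n by (simp add: divide_le_eq field_simps)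
    moreover have "x/(x/n+1) \<le> n" using x n d by (simp add: divide_le_eq field_simps)
    ultimately show ?thesis by simp
  qed
  then have "x^2/(x/n+1) \<le> x * min x n" using x by (simp add: power2_eq_square mult_left_mono times_divide_eq_right[symmetric] del: times_divide_eq_right)
  then have "(x^2/(x/n+1))^m \<le> (x * min x n)^m" using x d by (intro power_mono) auto
  then show ?thesis by (simp add: power_divide power_mult power_mult_distrib)
qed

lemma Gbound:
  fixes x n :: real and m p :: nat
  assumes x: "x > 0" and n: "n \<ge> 1" and m: "m \<le> p"
  shows "x^m * (min x n)^m \<le> (1 + x^p) * n^(2*m-p)"
proof (cases "2*m \<le> p")
  case True
  have "x^m * (min x n)^m \<le> x^m * x^m" using x n by (intro mult_left_mono power_mono) auto
  also have "\<dots> = x^(2*m)" by (simp add: power_add[symmetric] mult_2)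
  also have "\<dots> \<le> 1 + x^p"
  proof (cases "x \<le> 1")
    case True then have "x^(2*m) \<le> 1" using x by (simp add: power_le_one)
    then show ?thesis using x by (simp add: add_increasing2)
  next
    case False then have "x^(2*m) \<le> x^p" using \<open>2*m \<le> p\<close> by (intro power_increasing) auto
    then show ?thesis by simp
  qed
  finally show ?thesis using True by simp
next
  case False
  have mn: "min x n \<ge> 0" using x n by simp
  have "(min x n)^m = (min x n)^(p-m) * (min x n)^(2*m-p)" using False m by (simp add: power_add[symmetric])
  also have "\<dots> \<le> x^(p-m) * n^(2*m-p)" using mn by (intro mult_mono power_mono) auto
  finally have "x^m * (min x n)^m \<le> x^m * (x^(p-m) * n^(2*m-p))" using x by (intro mult_left_mono) auto
  also have "\<dots> = x^p * n^(2*m-p)" using m by (simp add: power_add[symmetric] mult.assoc[symmetric])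
  also have "\<dots> \<le> (1 + x^p) * n^(2*m-p)" using n by (intro mult_right_mono) auto
  finally show ?thesis .
qed

lemma comb:
  fixes \<gamma> :: "nat \<Rightarrow> nat"
  assumes r: "r \<ge> 2" and gp: "\<And>i. i \<in> {1..r} \<Longrightarrow> \<gamma> i > 0" and gs: "(\<Sum>i=1..r. \<gamma> i) = p"
    and ns: "\<not> (r = 2 \<and> (\<gamma> 1 = 1 \<or> \<gamma> 2 = 1))"
  shows "(\<Sum>i=1..r. 2*\<gamma> i - p) \<le> p - r - 1"
proof (cases "\<forall>i\<in>{1..r}. 2*\<gamma> i \<le> p")
  case True
  then have "(\<Sum>i=1..r. 2*\<gamma> i - p) = 0" by simp
  then show ?thesis by simp
next
  case False
  then obtain k where k: "k \<in> {1..r}" "2*\<gamma> k > p" by auto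
  have le2: "\<gamma> i + \<gamma> k \<le> p" if "i \<in> {1..r}" "i \<noteq> k" for i
  proof -
    have "(\<Sum>j\<in>{i,k}. \<gamma> j) \<le> (\<Sum>j=1..r. \<gamma> j)" using that k by (intro sum_mono2) auto
    then show ?thesis using that gs by simp
  qed
  have "(\<Sum>i=1..r. 2*\<gamma> i - p) = (\<Sum>i\<in>{1..r}. if i = k then 2*\<gamma> k - p else 0)"
  proof (rule sum.cong)
    fix i assume "i \<in> {1..r}" then show "2*\<gamma> i - p = (if i = k then 2*\<gamma> k - p else 0)"
      using le2[of i] k by auto
  qed simp
  also have "\<dots> = 2*\<gamma> k - p" using k by simp
  finally have eq: "(\<Sum>i=1..r. 2*\<gamma> i - p) = 2*\<gamma> k - p" .
  have "(\<Sum>i\<in>{1..r}-{k}. 1) \<le> (\<Sum>i\<in>{1..r}-{k}. \<gamma> i)" using gp by (intro sum_mono) (auto simp: Suc_le_eq)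
  moreover have "(\<Sum>i\<in>{1..r}-{k}. (1::nat)) = r - 1" using k by simp
  moreover have "(\<Sum>i\<in>{1..r}-{k}. \<gamma> i) = p - \<gamma> k" using k gs sum_diff1_nat[of \<gamma> "{1..r}" k] by simp
  moreover have "\<gamma> k \<le> p" using k gs member_le_sum[of k "{1..r}" \<gamma>] by simp
  ultimately have gk: "\<gamma> k + (r - 1) \<le> p" by linarith
  show ?thesis
  proof (cases "r = 2")
    case False then show ?thesis using eq gk r by linarith
  next
    case True
    then have "k = 1 \<or> k = 2" using k by auto
    then obtain j2 where o: "j2 \<in> {1..r}" "j2 \<noteq> k" "\<gamma> j2 \<ge> 2"
    proof -
      have g12: "\<gamma> 1 \<ge> 2" "\<gamma> 2 \<ge> 2" using True ns gp[of 1] gp[of 2] by auto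
      show ?thesis
      proof (cases "k = 1")
        case True then show ?thesis using g12 \<open>r = 2\<close> by (intro that[of 2]) auto
      next
        case False then show ?thesis using g12 \<open>r = 2\<close> by (intro that[of 1]) auto
      qed
    qed
    have "\<gamma> j2 + \<gamma> k \<le> p" using le2 o by auto
    then show ?thesis using eq True o by linarith
  qed
qed



context prob_space begin

lemma dyadic:
  fixes Y :: "'a \<Rightarrow> real" and h :: "real \<Rightarrow> real"
  assumes Y: "Y \<in> borel_measurable M" and Ypos: "\<And>\<omega>. \<omega> \<in> space M \<Longrightarrow> Y \<omega> > 0"
    and x0: "x0 > 0" and c: "c \<ge> 0"
    and tl: "\<And>x. x \<ge> x0 \<Longrightarrow> measure M {\<omega>\<in>space M. Y \<omega> \<ge> x} \<le> c / x ^ q"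
    and hm: "mono_on {0..} h" and hpos: "\<And>x. x \<ge> 0 \<Longrightarrow> h x \<ge> 0"
    and sm: "summable (\<lambda>j. h (x0*2^Suc j) * (c / (x0*2^j)^q))"
  shows "(\<integral>\<^sup>+\<omega>. h (Y \<omega>) \<partial>M) \<le> ennreal (h x0 + (\<Sum>j. h (x0*2^Suc j) * (c / (x0*2^j)^q)))"
proof -
  define A where "A j = {\<omega>\<in>space M. Y \<omega> \<ge> x0*2^j}" for j :: nat
  have Am: "A j \<in> sets M" for j unfolding A_def using Y by measurable
  have pw: "ennreal (h (Y \<omega>)) \<le> ennreal (h x0) + (\<Sum>j. ennreal (h (x0*2^Suc j)) * indicator (A j) \<omega>)"
    if w: "\<omega> \<in> space M" for \<omega>
  proof (cases "Y \<omega> \<le> x0")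
    case True
    then have "h (Y \<omega>) \<le> h x0" using hm Ypos[OF w] x0 by (auto intro: mono_onD)
    then show ?thesis by (simp add: add_increasing2 ennreal_leI)
  next
    case False
    have "\<exists>j. Y \<omega> / x0 < 2^j" using real_arch_pow[of 2 "Y \<omega> / x0"] by auto
    then have ex: "\<exists>j. Y \<omega> \<le> x0 * 2^j" using x0 by (metis less_eq_real_def mult.commute pos_divide_less_eq)
    define k where "k = (LEAST j. Y \<omega> \<le> x0 * 2^j)"
    have k1: "Y \<omega> \<le> x0 * 2^k" unfolding k_def by (rule LeastI_ex[OF ex])
    have "k \<noteq> 0" using k1 False by (metis mult.right_neutral power_0)
    then obtain j where kj: "k = Suc j" by (cases k) auto
    have "\<not> Y \<omega> \<le> x0 * 2^j" using not_less_Least[of j "\<lambda>j. Y \<omega> \<le> x0 * 2^j"] kj k_def by auto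
    then have inA: "\<omega> \<in> A j" using w by (auto simp: A_def)
    have "h (Y \<omega>) \<le> h (x0*2^Suc j)" using hm Ypos[OF w] k1 kj x0 by (auto intro: mono_onD)
    then have "ennreal (h (Y \<omega>)) \<le> ennreal (h (x0*2^Suc j)) * indicator (A j) \<omega>"
      using inA by (simp add: ennreal_leI)
    also have "\<dots> \<le> (\<Sum>j. ennreal (h (x0*2^Suc j)) * indicator (A j) \<omega>)"
    proof -
      have "sum (\<lambda>j. ennreal (h (x0*2^Suc j)) * indicator (A j) \<omega>) {j} \<le> (\<Sum>j. ennreal (h (x0*2^Suc j)) * indicator (A j) \<omega>)"
        by (rule sum_le_suminf) (auto intro: summableI)
      then show ?thesis by (simp only: sum.insert_remove finite.emptyI empty_Diff sum.empty add_0_right)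
    qed
    finally show ?thesis by (simp add: add_increasing)
  qed
  have "(\<integral>\<^sup>+\<omega>. h (Y \<omega>) \<partial>M) \<le> (\<integral>\<^sup>+\<omega>. ennreal (h x0) + (\<Sum>j. ennreal (h (x0*2^Suc j)) * indicator (A j) \<omega>) \<partial>M)"
    by (rule nn_integral_mono) (use pw in auto)
  also have "\<dots> = (\<integral>\<^sup>+\<omega>. ennreal (h x0) \<partial>M) + (\<integral>\<^sup>+\<omega>. (\<Sum>j. ennreal (h (x0*2^Suc j)) * indicator (A j) \<omega>) \<partial>M)"
    by (rule nn_integral_add) (use Am in auto)
  also have "(\<integral>\<^sup>+\<omega>. (\<Sum>j. ennreal (h (x0*2^Suc j)) * indicator (A j) \<omega>) \<partial>M) = (\<Sum>j. \<integral>\<^sup>+\<omega>. ennreal (h (x0*2^Suc j)) * indicator (A j) \<omega> \<partial>M)"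
    by (subst nn_integral_suminf) (use Am in auto)
  also have "\<dots> = (\<Sum>j. ennreal (h (x0*2^Suc j)) * emeasure M (A j))"
    using Am by (simp add: nn_integral_cmult_indicator)
  also have "\<dots> \<le> (\<Sum>j. ennreal (h (x0*2^Suc j) * (c / (x0*2^j)^q)))"
  proof (rule suminf_le)
    fix j
    have "emeasure M (A j) = ennreal (measure M (A j))" by (simp add: emeasure_eq_measure)
    also have "\<dots> \<le> ennreal (c / (x0*2^j)^q)" unfolding A_def
      by (rule ennreal_leI, rule tl) (use x0 in auto)
    finally have "emeasure M (A j) \<le> ennreal (c / (x0*2^j)^q)" .
    then show "ennreal (h (x0*2^Suc j)) * emeasure M (A j) \<le> ennreal (h (x0*2^Suc j) * (c / (x0*2^j)^q))"
    proof -
      have "ennreal (h (x0*2^Suc j)) * emeasure M (A j) \<le> ennreal (h (x0*2^Suc j)) * ennreal (c / (x0*2^j)^q)"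
        using \<open>emeasure M (A j) \<le> _\<close> by (rule mult_left_mono) simp
      also have "\<dots> = ennreal (h (x0*2^Suc j) * (c / (x0*2^j)^q))"
        using hpos[of "x0*2^Suc j"] x0 c by (subst ennreal_mult) auto
      finally show ?thesis .
    qed
  qed (auto intro: summableI)
  also have "\<dots> = ennreal (\<Sum>j. h (x0*2^Suc j) * (c / (x0*2^j)^q))"
    by (rule suminf_ennreal2[OF _ sm]) (use hpos x0 c in auto)
  finally have fin: "(\<integral>\<^sup>+\<omega>. h (Y \<omega>) \<partial>M) \<le> ennreal (h x0) + ennreal (\<Sum>j. h (x0*2^Suc j) * (c / (x0*2^j)^q))"
    by (simp add: emeasure_space_1)
  have "0 \<le> (\<Sum>j. h (x0*2^Suc j) * (c / (x0*2^j)^q))"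
    by (rule suminf_nonneg[OF sm]) (use hpos x0 c in auto)
  then show ?thesis using fin hpos[of x0] x0 by (simp add: ennreal_plus[symmetric] del: ennreal_plus)
qed


lemma fine:
  fixes Y :: "'a \<Rightarrow> real" and n :: real and k :: nat
  assumes Y: "Y \<in> borel_measurable M" and Ypos: "\<And>\<omega>. \<omega> \<in> space M \<Longrightarrow> Y \<omega> > 0"
    and x0: "x0 \<ge> 1" and c: "c \<ge> 0"
    and tl: "\<And>x. x \<ge> x0 \<Longrightarrow> measure M {\<omega>\<in>space M. Y \<omega> \<ge> x} \<le> c / x ^ (k+4)"
    and n: "n \<ge> 1"
  shows "(\<integral>\<^sup>+\<omega>. Y \<omega>^(k+2) * (min (Y \<omega>) n)^(k+2) \<partial>M) \<le> ennreal (x0^(2*k+4) + 4^(k+2)*c*n^k*(log 2 n + 3))"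
proof -
  define h where "h y = y^(k+2) * (min y n)^(k+2)" for y :: real
  have hm: "mono_on {0..} h" unfolding h_def
    by (rule mono_onI) (use n in \<open>auto intro!: mult_mono power_mono simp: min_def\<close>)
  have hpos: "h y \<ge> 0" if "y \<ge> 0" for y unfolding h_def using that n by auto
  define t where "t j = h (x0*2^Suc j) * (c / (x0*2^j)^(k+4))" for j
  have tb: "t j \<le> 4^(k+2)*c*n^k * min 1 (n^2/4^j)" for j
  proof -
    have "x0*2^j \<ge> 2^j" using x0 by simp
    have e: "x0*2^Suc j = 2*(x0*2^j)" by simp
    show ?thesis unfolding t_def h_def e by (rule termb[OF n \<open>x0*2^j \<ge> 2^j\<close> c])
  qed
  have t0: "t j \<ge> 0" for j unfolding t_def using hpos[of "x0*2^Suc j"] x0 c by simp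
  have sm: "summable t"
    by (rule summable_comparison_test'[where g="\<lambda>j. 4^(k+2)*c*n^k * min 1 (n^2/4^j)"])
       (use minsum(1)[OF n] t0 tb in \<open>auto intro: summable_mult\<close>)
  have "(\<Sum>j. t j) \<le> (\<Sum>j. 4^(k+2)*c*n^k * min 1 (n^2/4^j))"
    by (rule suminf_le) (use minsum(1)[OF n] sm tb in \<open>auto intro: summable_mult\<close>)
  also have "\<dots> = 4^(k+2)*c*n^k * (\<Sum>j. min 1 (n^2/4^j))"
    by (rule suminf_mult[OF minsum(1)[OF n]])
  also have "\<dots> \<le> 4^(k+2)*c*n^k * (log 2 n + 3)"
    using minsum(2)[OF n] c n by (intro mult_left_mono) auto
  finally have S: "(\<Sum>j. t j) \<le> 4^(k+2)*c*n^k * (log 2 n + 3)" .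
  have hx0: "h x0 \<le> x0^(2*k+4)"
  proof -
    have "h x0 \<le> x0^(k+2) * x0^(k+2)" unfolding h_def using x0 n
      by (intro mult_left_mono power_mono) auto
    also have "\<dots> = x0^(2*k+4)"
    proof -
      have "2*k+4 = (k+2)+(k+2)" by simp
      then show ?thesis by (simp only: power_add)
    qed
    finally show ?thesis .
  qed
  have sm': "summable (\<lambda>j. h (x0*2^Suc j) * (c / (x0*2^j)^(k+4)))" using sm unfolding t_def .
  have "(\<integral>\<^sup>+\<omega>. h (Y \<omega>) \<partial>M) \<le> ennreal (h x0 + (\<Sum>j. t j))"
    unfolding t_def
    by (rule dyadic[OF Y Ypos _ c tl hm hpos sm']) (use x0 in auto)
  also have "\<dots> \<le> ennreal (x0^(2*k+4) + 4^(k+2)*c*n^k*(log 2 n + 3))"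
    using S hx0 by (intro ennreal_leI) auto
  finally show ?thesis by (simp add: h_def)
qed

lemma moment:
  fixes Y :: "'a \<Rightarrow> real" and p :: nat
  assumes Y: "Y \<in> borel_measurable M" and Ypos: "\<And>\<omega>. \<omega> \<in> space M \<Longrightarrow> Y \<omega> > 0"
    and x0: "x0 \<ge> 1" and c: "c \<ge> 0"
    and tl: "\<And>x. x \<ge> x0 \<Longrightarrow> measure M {\<omega>\<in>space M. Y \<omega> \<ge> x} \<le> c / x ^ (p+1)"
  shows "(\<integral>\<^sup>+\<omega>. Y \<omega>^p \<partial>M) \<le> ennreal (x0^p + 2^(p+1)*c)"
proof -
  define h where "h y = y^p" for y :: real
  have hm: "mono_on {0..} h" unfolding h_def
    by (rule mono_onI) (auto intro!: power_mono)
  have hpos: "h y \<ge> 0" if "y \<ge> 0" for y unfolding h_def using that by auto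
  define t where "t j = h (x0*2^Suc j) * (c / (x0*2^j)^(p+1))" for j
  have te: "t j = (2^p*c/x0) * (1/2)^j" for j
  proof -
    have a: "(x0*2^Suc j)^p = 2^p * (x0*2^j)^p" by (simp add: power_mult_distrib)
    have b: "(x0*2^j)^(p+1) = (x0*2^j)^p * (x0*2^j)" by simp
    have pos: "(x0*2^j)^p > 0" "x0*2^j > 0" using x0 by auto
    have "t j = 2^p * c / (x0*2^j)" unfolding t_def h_def a b using pos
      by (simp add: field_simps)
    also have "\<dots> = (2^p*c/x0) * (1/2)^j" by (simp add: power_one_over)
    finally show ?thesis .
  qed
  have sm: "summable t" unfolding te by (intro summable_mult summable_geometric) auto
  have "(\<Sum>j. t j) = (2^p*c/x0) * 2" unfolding te by (subst suminf_mult) (auto simp: suminf_geometric)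
  also have "\<dots> \<le> 2^(p+1)*c" using x0 c by (simp add: field_simps mult_left_mono)
  finally have S: "(\<Sum>j. t j) \<le> 2^(p+1)*c" .
  have sm': "summable (\<lambda>j. h (x0*2^Suc j) * (c / (x0*2^j)^(p+1)))" using sm unfolding t_def .
  have "(\<integral>\<^sup>+\<omega>. h (Y \<omega>) \<partial>M) \<le> ennreal (h x0 + (\<Sum>j. t j))"
    unfolding t_def
    by (rule dyadic[OF Y Ypos _ c tl hm hpos sm']) (use x0 in auto)
  also have "\<dots> \<le> ennreal (x0^p + 2^(p+1)*c)"
    using S by (intro ennreal_leI) (auto simp: h_def)
  finally show ?thesis by (simp add: h_def)
qed

end


lemma nn_to_integral:
  fixes f :: "'a \<Rightarrow> real"
  assumes "f \<in> borel_measurable M" "\<And>x. x \<in> space M \<Longrightarrow> f x \<ge> 0" "(\<integral>\<^sup>+x. f x \<partial>M) \<le> ennreal B" "B \<ge> 0"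
  shows "integral\<^sup>L M f \<le> B"
proof -
  have i: "integrable M f"
    by (rule integrableI_nonneg) (use assms in \<open>auto simp: top.not_eq_extremum intro: le_less_trans\<close>)
  have "ennreal (integral\<^sup>L M f) = (\<integral>\<^sup>+x. f x \<partial>M)"
    by (rule nn_integral_eq_integral[symmetric, OF i]) (use assms in auto)
  then have "ennreal (integral\<^sup>L M f) \<le> ennreal B" using assms by simp
  then show ?thesis using assms by (subst (asm) ennreal_le_iff2) auto
qed

theorem lemma6:
  fixes M :: "'a measure" and X :: "nat \<Rightarrow> 'a \<Rightarrow> real"
    and p r :: nat and \<gamma> :: "nat \<Rightarrow> nat"
  assumes "prob_space M"
    and rv: "\<And>i. X i \<in> borel_measurable M"
    and indep: "prob_space.indep_vars M (\<lambda>_. borel) X UNIV"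
    and ident: "\<And>i. distr M borel (X i) = distr M borel (X 0)"
    and pos: "\<And>i \<omega>. \<omega> \<in> space M \<Longrightarrow> X i \<omega> > 0"
    and int: "integrable M (X 0)"
    and mean: "prob_space.expectation M (X 0) = 1"
    and p: "p \<ge> 2"
    and tail: "(\<lambda>x::real. measure M {\<omega> \<in> space M. X 0 \<omega> \<ge> x})
                 \<in> o[at_top](\<lambda>x. x powr (- real (p + 1)))"
    and r: "2 \<le> r" "r \<le> p - 1"
    and \<gamma>pos: "\<And>i. i \<in> {1..r} \<Longrightarrow> \<gamma> i > 0"
    and \<gamma>sum: "(\<Sum>i=1..r. \<gamma> i) = p"
  shows "(\<lambda>n::nat. prob_space.expectation M
            (\<lambda>\<omega>. (\<Prod>i=1..r. X i \<omega> ^ (2 * \<gamma> i))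
                  / ((\<Sum>i=1..r. X i \<omega>) / real n + 1) ^ p))
         \<in> o[at_top](\<lambda>n. real n ^ (p - r - 1) * ln (real n))"
proof -
  interpret prob_space M by fact
  note rv[measurable]
  define G where "G n m x = x^(2*m) / (\<bar>x\<bar>/n+1)^m" for n :: real and m :: nat and x :: real
  define a where "a n m = enn2real (\<integral>\<^sup>+\<omega>. G n m (X 0 \<omega>) \<partial>M)" for n m
  define F where "F n \<omega> = (\<Prod>i=1..r. X i \<omega> ^ (2 * \<gamma> i)) / ((\<Sum>i=1..r. X i \<omega>) / n + 1) ^ p" for n :: real and \<omega>
  define E where "E n = expectation (F (real n))" for n :: nat
  have Gm[measurable]: "G n m \<in> borel_measurable borel" for n m unfolding G_def by measurable
  have Fm[measurable]: "F n \<in> borel_measurable M" for n unfolding F_def by measurable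
  have Gnn: "G n m x \<ge> 0" if "n > 0" for n m x
    unfolding G_def using that by (simp add: add_pos_nonneg less_imp_le)
  have Fnn: "F n \<omega> \<ge> 0" if "\<omega> \<in> space M" "n \<ge> 0" for n \<omega>
    unfolding F_def using that pos by (simp add: add_pos_nonneg less_imp_le prod_nonneg sum_nonneg)
  have tl: "\<exists>x0\<ge>1. \<forall>x\<ge>x0. measure M {\<omega>\<in>space M. X 0 \<omega> \<ge> x} \<le> c / x^(p+1)" if c: "c > 0" for c
  proof -
    have "eventually (\<lambda>x. norm (measure M {\<omega> \<in> space M. X 0 \<omega> \<ge> x}) \<le> c * norm (x powr (- real (p + 1)))) at_top"
      by (rule landau_o.smallD[OF tail c])
    then obtain N where N: "\<And>x. x \<ge> N \<Longrightarrow> norm (measure M {\<omega> \<in> space M. X 0 \<omega> \<ge> x}) \<le> c * norm (x powr (- real (p + 1)))"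
      by (auto simp: eventually_at_top_linorder)
    have "\<forall>x\<ge>max N 1. measure M {\<omega>\<in>space M. X 0 \<omega> \<ge> x} \<le> c / x^(p+1)"
    proof (intro allI impI)
      fix x :: real assume x: "x \<ge> max N 1"
      then have xp: "x > 0" by simp
      have "x powr (- real (p + 1)) = inverse (x powr real (p+1))" by (rule powr_minus)
      also have "x powr real (p+1) = x^(p+1)" using xp by (rule powr_realpow)
      finally have "x powr (- real (p + 1)) = inverse (x^(p+1))" .
      then show "measure M {\<omega>\<in>space M. X 0 \<omega> \<ge> x} \<le> c / x^(p+1)"
        using N[of x] x xp by (simp add: divide_inverse)
    qed
    then show ?thesis by (intro exI[of _ "max N 1"]) auto
  qed
  have idn: "(\<integral>\<^sup>+\<omega>. f (X i \<omega>) \<partial>M) = (\<integral>\<^sup>+\<omega>. f (X 0 \<omega>) \<partial>M)" if [measurable]: "f \<in> borel_measurable borel" for f :: "real \<Rightarrow> real" and i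
  proof -
    have "(\<integral>\<^sup>+\<omega>. f (X i \<omega>) \<partial>M) = (\<integral>\<^sup>+x. f x \<partial>distr M borel (X i))"
      using nn_integral_distr[of "X i" M borel "\<lambda>x. ennreal (f x)"] by simp
    also have "\<dots> = (\<integral>\<^sup>+x. f x \<partial>distr M borel (X 0))" by (subst ident[of i]) (rule refl)
    also have "\<dots> = (\<integral>\<^sup>+\<omega>. f (X 0 \<omega>) \<partial>M)"
      using nn_integral_distr[of "X 0" M borel "\<lambda>x. ennreal (f x)"] by simp
    finally show ?thesis .
  qed
  obtain K0 where K0: "K0 \<ge> 1" "\<And>n m. n \<ge> 1 \<Longrightarrow> m \<le> p \<Longrightarrow> (\<integral>\<^sup>+\<omega>. G n m (X 0 \<omega>) \<partial>M) \<le> ennreal (K0 * n^(2*m-p))"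
  proof -
    obtain x1 where x1: "x1 \<ge> 1" "\<And>x. x \<ge> x1 \<Longrightarrow> measure M {\<omega>\<in>space M. X 0 \<omega> \<ge> x} \<le> 1 / x^(p+1)"
      using tl[of 1] by auto
    have mom: "(\<integral>\<^sup>+\<omega>. X 0 \<omega>^p \<partial>M) \<le> ennreal (x1^p + 2^(p+1)*1)"
      by (rule moment[OF rv pos x1(1) _ x1(2)]) auto
    define K where "K = 1 + x1^p + 2^(p+1)"
    have K1: "K \<ge> 1" unfolding K_def using x1 by simp
    have "(\<integral>\<^sup>+\<omega>. G n m (X 0 \<omega>) \<partial>M) \<le> ennreal (K * n^(2*m-p))" if n: "n \<ge> 1" and m: "m \<le> p" for n :: real and m
    proof -
      have "(\<integral>\<^sup>+\<omega>. G n m (X 0 \<omega>) \<partial>M) \<le> (\<integral>\<^sup>+\<omega>. ennreal (n^(2*m-p)) + ennreal (n^(2*m-p)) * ennreal (X 0 \<omega>^p) \<partial>M)"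
      proof (rule nn_integral_mono)
        fix \<omega> assume w: "\<omega> \<in> space M"
        have x: "X 0 \<omega> > 0" using pos[OF w] .
        have "G n m (X 0 \<omega>) \<le> X 0 \<omega>^m * (min (X 0 \<omega>) n)^m"
          unfolding G_def using Gcore[OF x, of n m] x n by simp
        also have "\<dots> \<le> (1 + X 0 \<omega>^p) * n^(2*m-p)" by (rule Gbound[OF x n m])
        also have "\<dots> = n^(2*m-p) + n^(2*m-p) * X 0 \<omega>^p" by (simp add: algebra_simps)
        finally show "ennreal (G n m (X 0 \<omega>)) \<le> ennreal (n^(2*m-p)) + ennreal (n^(2*m-p)) * ennreal (X 0 \<omega>^p)"
          using x n by (simp add: ennreal_mult[symmetric] ennreal_plus[symmetric] del: ennreal_plus)
      qed
      also have "\<dots> = (\<integral>\<^sup>+\<omega>. ennreal (n^(2*m-p)) \<partial>M) + (\<integral>\<^sup>+\<omega>. ennreal (n^(2*m-p)) * ennreal (X 0 \<omega>^p) \<partial>M)"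
        by (rule nn_integral_add) auto
      also have "\<dots> = ennreal (n^(2*m-p)) + ennreal (n^(2*m-p)) * (\<integral>\<^sup>+\<omega>. X 0 \<omega>^p \<partial>M)"
        by (simp add: nn_integral_cmult emeasure_space_1)
      also have "\<dots> \<le> ennreal (n^(2*m-p)) + ennreal (n^(2*m-p)) * ennreal (x1^p + 2^(p+1)*1)"
        using mom by (intro add_left_mono mult_left_mono) auto
      also have "\<dots> = ennreal (K * n^(2*m-p))"
        using n x1 by (simp add: K_def ennreal_mult[symmetric] ennreal_plus[symmetric] algebra_simps del: ennreal_plus)
      finally show ?thesis .
    qed
    then show ?thesis using K1 that by blast
  qed
  have afin: "(\<integral>\<^sup>+\<omega>. G n m (X 0 \<omega>) \<partial>M) = ennreal (a n m) \<and> 0 \<le> a n m \<and> a n m \<le> K0 * n^(2*m-p)"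
    if "n \<ge> 1" "m \<le> p" for n m
  proof -
    have b: "(\<integral>\<^sup>+\<omega>. G n m (X 0 \<omega>) \<partial>M) \<le> ennreal (K0 * n^(2*m-p))" by (rule K0(2)[OF that])
    have nt: "(\<integral>\<^sup>+\<omega>. G n m (X 0 \<omega>) \<partial>M) \<noteq> \<top>"
    proof
      assume "(\<integral>\<^sup>+\<omega>. G n m (X 0 \<omega>) \<partial>M) = \<top>"
      then show False using b by (simp add: top_unique)
    qed
    have e: "(\<integral>\<^sup>+\<omega>. G n m (X 0 \<omega>) \<partial>M) = ennreal (a n m)" unfolding a_def using nt by (simp add: ennreal_enn2real_if)
    have "ennreal (a n m) \<le> ennreal (K0 * n^(2*m-p))" using b e by simp
    moreover have "K0 * n^(2*m-p) \<ge> 0" using K0(1) that by simp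
    ultimately have "a n m \<le> K0 * n^(2*m-p)" by (simp add: ennreal_le_iff)
    moreover have "0 \<le> a n m" unfolding a_def by (rule enn2real_nonneg)
    ultimately show ?thesis using e by blast
  qed
  have gle: "\<gamma> i \<le> p" if "i \<in> {1..r}" for i
    using member_le_sum[of i "{1..r}" \<gamma>] that \<gamma>sum by simp
  have Ebound: "E n \<le> (\<Prod>i=1..r. a (real n) (\<gamma> i))" if n1: "n \<ge> 1" for n
  proof -
    have nr: "real n \<ge> 1" using n1 by simp
    have "(\<integral>\<^sup>+\<omega>. F (real n) \<omega> \<partial>M) \<le> (\<integral>\<^sup>+\<omega>. (\<Prod>i\<in>{1..r}. G (real n) (\<gamma> i) (X i \<omega>)) \<partial>M)"
    proof (rule nn_integral_mono)
      fix \<omega> assume w: "\<omega> \<in> space M"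
      have "F (real n) \<omega> \<le> (\<Prod>i\<in>{1..r}. X i \<omega>^(2*\<gamma> i)/(X i \<omega>/real n+1)^(\<gamma> i))"
        unfolding F_def using pw[of "{1..r}" "\<lambda>i. X i \<omega>" "real n" \<gamma>] pos[OF w] nr \<gamma>sum by simp
      also have "\<dots> = (\<Prod>i\<in>{1..r}. G (real n) (\<gamma> i) (X i \<omega>))"
        unfolding G_def using pos[OF w] by (intro prod.cong) (auto simp: less_imp_le)
      finally show "ennreal (F (real n) \<omega>) \<le> ennreal (\<Prod>i\<in>{1..r}. G (real n) (\<gamma> i) (X i \<omega>))"
        by (rule ennreal_leI)
    qed
    also have "\<dots> = (\<Prod>i\<in>{1..r}. \<integral>\<^sup>+\<omega>. G (real n) (\<gamma> i) (X i \<omega>) \<partial>M)"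
    proof -
      have "indep_vars (\<lambda>_. borel) X {1..r}" by (rule indep_vars_subset[OF indep]) auto
      then have IV: "indep_vars (\<lambda>_. borel) (\<lambda>i \<omega>. ennreal (G (real n) (\<gamma> i) (X i \<omega>))) {1..r}"
        by (rule indep_vars_compose2[where Y="\<lambda>i x. ennreal (G (real n) (\<gamma> i) x)"]) auto
      have "(\<integral>\<^sup>+\<omega>. (\<Prod>i\<in>{1..r}. ennreal (G (real n) (\<gamma> i) (X i \<omega>))) \<partial>M) = (\<Prod>i\<in>{1..r}. \<integral>\<^sup>+\<omega>. G (real n) (\<gamma> i) (X i \<omega>) \<partial>M)"
        by (rule indep_vars_nn_integral[OF _ IV]) auto
      moreover have "(\<integral>\<^sup>+\<omega>. (\<Prod>i\<in>{1..r}. ennreal (G (real n) (\<gamma> i) (X i \<omega>))) \<partial>M) = (\<integral>\<^sup>+\<omega>. ennreal (\<Prod>i\<in>{1..r}. G (real n) (\<gamma> i) (X i \<omega>)) \<partial>M)"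
        by (intro nn_integral_cong prod_ennreal) (use Gnn nr in auto)
      ultimately show ?thesis by simp
    qed
    also have "\<dots> = (\<Prod>i\<in>{1..r}. ennreal (a (real n) (\<gamma> i)))"
    proof (rule prod.cong)
      fix i assume i: "i \<in> {1..r}"
      show "(\<integral>\<^sup>+\<omega>. G (real n) (\<gamma> i) (X i \<omega>) \<partial>M) = ennreal (a (real n) (\<gamma> i))"
        using idn[of "G (real n) (\<gamma> i)" i] afin[OF nr gle[OF i]] by simp
    qed simp
    also have "\<dots> = ennreal (\<Prod>i\<in>{1..r}. a (real n) (\<gamma> i))"
      by (rule prod_ennreal) (use afin[OF nr] gle in auto)
    finally have I: "(\<integral>\<^sup>+\<omega>. F (real n) \<omega> \<partial>M) \<le> ennreal (\<Prod>i\<in>{1..r}. a (real n) (\<gamma> i))" .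
    have "(\<Prod>i\<in>{1..r}. a (real n) (\<gamma> i)) \<ge> 0" by (rule prod_nonneg) (use afin[OF nr] gle in auto)
    then show ?thesis unfolding E_def by (intro nn_to_integral[OF Fm _ I]) (auto intro: Fnn)
  qed
  have Enn: "E n \<ge> 0" for n unfolding E_def by (intro integral_nonneg_AE AE_I2 Fnn) auto
  have lnev: "eventually (\<lambda>n::nat. ln (real n) \<ge> B) at_top" for B
  proof -
    have "filterlim (\<lambda>n::nat. ln (real n)) at_top at_top"
      by (rule filterlim_compose[OF ln_at_top filterlim_real_sequentially])
    then show ?thesis by (simp add: filterlim_at_top)
  qed
  have n1ev: "eventually (\<lambda>n::nat. n \<ge> 1) at_top" by (rule eventually_ge_at_top)
  have main: "E \<in> o[at_top](\<lambda>n. real n ^ (p - r - 1) * ln (real n))"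
  proof (rule landau_o.smallI)
    fix c :: real assume c: "c > 0"
    show "eventually (\<lambda>n. norm (E n) \<le> c * norm (real n ^ (p - r - 1) * ln (real n))) at_top"
    proof (cases "r = 2 \<and> (\<gamma> 1 = 1 \<or> \<gamma> 2 = 1)")
      case False
      have cs: "(\<Sum>i=1..r. 2*\<gamma> i - p) \<le> p - r - 1" by (rule comb[OF r(1) \<gamma>pos \<gamma>sum False])
      have B: "E n \<le> K0^r * real n ^ (p - r - 1)" if n1: "n \<ge> 1" for n
      proof -
        have nr: "real n \<ge> 1" using n1 by simp
        have "E n \<le> (\<Prod>i=1..r. a (real n) (\<gamma> i))" by (rule Ebound[OF n1])
        also have "\<dots> \<le> (\<Prod>i=1..r. K0 * real n ^ (2*\<gamma> i - p))"
          by (rule prod_mono) (use afin[OF nr] gle in auto)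
        also have "\<dots> = K0^r * real n ^ (\<Sum>i=1..r. 2*\<gamma> i - p)"
          by (simp add: prod.distrib power_sum)
        also have "\<dots> \<le> K0^r * real n ^ (p - r - 1)"
          using K0(1) nr cs by (intro mult_left_mono power_increasing) auto
        finally show ?thesis .
      qed
      show ?thesis using n1ev lnev[of "K0^r / c"]
      proof eventually_elim
        case (elim n)
        have nr: "real n \<ge> 1" using elim by simp
        have L: "ln (real n) \<ge> 0" using nr by simp
        have T: "real n ^ (p - r - 1) \<ge> 1" using nr by simp
        have "K0^r \<le> c * ln (real n)" using elim(2) c by (simp add: field_simps)
        then have "K0^r * real n ^ (p - r - 1) \<le> c * ln (real n) * real n ^ (p - r - 1)"
          using T by (intro mult_right_mono) auto
        then show ?case using B[OF elim(1)] Enn[of n] L T by (simp add: abs_mult mult_ac)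
      qed
    next
      case True
      then have r2: "r = 2" by simp
      have p3: "p \<ge> 3" using r by simp
      then obtain k where k: "p = k + 3" by (metis add.commute le_Suc_ex)
      have sum2: "\<gamma> 1 + \<gamma> 2 = p" using \<gamma>sum r2 by (simp add: numeral_2_eq_2)
      have pr: "p - r - 1 = k" using k r2 by simp
      have prod2: "(\<Prod>i=1..r. a n (\<gamma> i)) = a n 1 * a n (k+2)" for n
      proof -
        have "(\<Prod>i=1..r. a n (\<gamma> i)) = a n (\<gamma> 1) * a n (\<gamma> 2)" using r2 by (simp add: numeral_2_eq_2)
        moreover have "(\<gamma> 1 = 1 \<and> \<gamma> 2 = k + 2) \<or> (\<gamma> 2 = 1 \<and> \<gamma> 1 = k + 2)" using True sum2 k by auto
        ultimately show ?thesis by auto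
      qed
      define c' where "c' = c * ln 2 / (4 * K0 * 4^(k+2))"
      have c': "c' > 0" unfolding c'_def using c K0(1) by simp
      obtain x0 where x0: "x0 \<ge> 1" "\<And>x. x \<ge> x0 \<Longrightarrow> measure M {\<omega>\<in>space M. X 0 \<omega> \<ge> x} \<le> c' / x^(k+4)"
        using tl[OF c'] k by (auto simp: add.commute)
      have B: "E n \<le> K0 * (x0^(2*k+4) + 4^(k+2)*c'*real n^k*(log 2 (real n) + 3))" if n1: "n \<ge> 1" for n
      proof -
        have nr: "real n \<ge> 1" using n1 by simp
        have a1: "a (real n) 1 \<le> K0" using afin[OF nr, of 1] p by simp
        have a1n: "a (real n) 1 \<ge> 0" using afin[OF nr, of 1] p by simp
        have fb: "(\<integral>\<^sup>+\<omega>. X 0 \<omega>^(k+2) * (min (X 0 \<omega>) (real n))^(k+2) \<partial>M) \<le> ennreal (x0^(2*k+4) + 4^(k+2)*c'*real n^k*(log 2 (real n) + 3))"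
          by (rule fine[OF rv pos x0(1) _ x0(2) nr]) (use c' in auto)
        have "ennreal (a (real n) (k+2)) = (\<integral>\<^sup>+\<omega>. G (real n) (k+2) (X 0 \<omega>) \<partial>M)"
          using afin[OF nr, of "k+2"] k by simp
        also have "\<dots> \<le> (\<integral>\<^sup>+\<omega>. X 0 \<omega>^(k+2) * (min (X 0 \<omega>) (real n))^(k+2) \<partial>M)"
        proof (rule nn_integral_mono)
          fix \<omega> assume w: "\<omega> \<in> space M"
          have x: "X 0 \<omega> > 0" using pos[OF w] .
          have "G (real n) (k+2) (X 0 \<omega>) \<le> X 0 \<omega>^(k+2) * (min (X 0 \<omega>) (real n))^(k+2)"
            unfolding G_def using Gcore[OF x, of "real n" "k+2"] x nr by simp
          then show "ennreal (G (real n) (k+2) (X 0 \<omega>)) \<le> ennreal (X 0 \<omega>^(k+2) * (min (X 0 \<omega>) (real n))^(k+2))"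
            by (rule ennreal_leI)
        qed
        also note fb
        finally have "ennreal (a (real n) (k+2)) \<le> ennreal (x0^(2*k+4) + 4^(k+2)*c'*real n^k*(log 2 (real n) + 3))" .
        moreover have "x0^(2*k+4) + 4^(k+2)*c'*real n^k*(log 2 (real n) + 3) \<ge> 0"
          using x0 c' nr by (intro add_nonneg_nonneg mult_nonneg_nonneg) auto
        ultimately have a2: "a (real n) (k+2) \<le> x0^(2*k+4) + 4^(k+2)*c'*real n^k*(log 2 (real n) + 3)"
          by (simp add: ennreal_le_iff)
        have a2n: "a (real n) (k+2) \<ge> 0" using afin[OF nr, of "k+2"] k by simp
        have "E n \<le> a (real n) 1 * a (real n) (k+2)" using Ebound[OF n1] prod2 by simp
        also have "\<dots> \<le> K0 * (x0^(2*k+4) + 4^(k+2)*c'*real n^k*(log 2 (real n) + 3))"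
          using a1 a1n a2 a2n K0(1) by (intro mult_mono) auto
        finally show ?thesis .
      qed
      show ?thesis using n1ev lnev[of "3 * ln 2"] lnev[of "2 * K0 * x0^(2*k+4) / c"]
      proof eventually_elim
        case (elim n)
        have nr: "real n \<ge> 1" using elim by simp
        define L where "L = ln (real n)"
        define T where "T = real n ^ k"
        have l2: "ln (2::real) > 0" by simp
        have L0: "L \<ge> 0" using nr by (simp add: L_def)
        have T1: "T \<ge> 1" using nr by (simp add: T_def)
        have lg: "log 2 (real n) = L / ln 2" by (simp add: L_def log_def)
        have lg3: "L / ln 2 \<ge> 3" using elim(2) l2 by (simp add: L_def field_simps)
        have s1: "log 2 (real n) + 3 \<le> 2 * (L / ln 2)" using lg lg3 by simp
        have "K0 * (4^(k+2)*c'*T*(log 2 (real n) + 3)) \<le> K0 * (4^(k+2)*c'*T*(2 * (L / ln 2)))"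
          using s1 K0(1) c' T1 by (intro mult_left_mono) auto
        also have "\<dots> = (c/2) * T * L" unfolding c'_def using K0(1) l2 by (simp add: field_simps)
        finally have s2: "K0 * (4^(k+2)*c'*T*(log 2 (real n) + 3)) \<le> (c/2) * T * L" .
        have "K0 * x0^(2*k+4) \<le> (c/2) * L" using elim(3) c by (simp add: L_def field_simps)
        also have "\<dots> \<le> (c/2) * T * L" proof -
          have "L \<le> T * L" using T1 L0 mult_right_mono[of 1 T L] by simp
          then show ?thesis using c by (simp add: mult.assoc)
        qed
        finally have s3: "K0 * x0^(2*k+4) \<le> (c/2) * T * L" .
        have "E n \<le> K0 * (x0^(2*k+4) + 4^(k+2)*c'*T*(log 2 (real n) + 3))" using B[OF elim(1)] by (simp add: T_def)
        also have "\<dots> = K0 * x0^(2*k+4) + K0 * (4^(k+2)*c'*T*(log 2 (real n) + 3))" by (simp add: algebra_simps)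
        also have "\<dots> \<le> c * T * L" using s2 s3 by simp
        finally have "E n \<le> c * T * L" .
        then show ?case using Enn[of n] L0 T1 pr by (simp add: abs_mult L_def T_def mult_ac)
      qed
    qed
  qed
  show ?thesis using main unfolding E_def F_def .
qed

end
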